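(* Let $\equiv_2$ be the equivalence relation on $\mathfrak S_n$ generated by the relations $bac\equiv_2 bca$ and $abc\equiv_2 acb$ for letters $a<b<c$ in three consecutive positions. For every $\sigma\in\mathfrak S_n$, the set of linear extensions of the poset $P_2(\sigma)$ (equivalently, words listing the values $1,\ldots,n$ once each in which every vertex of the tree $P_2(\sigma)$ appears to the right of its parent) is exactly the $\equiv_2$-class of $\sigma$.
   Context: For $\sigma=\sigma_1\cdots\sigma_n\in\mathfrak S_n$, let $m_1>m_2>\cdots>m_k=1$ be the left-to-right minima of $\sigma$, i.e. the values $\sigma_j$ all of whose left neighbours in the word are greater, listed from left to right. $P_2(\sigma)$ is the poset whose Hasse diagram is the rooted tree obtained as follows: the chain $m_1,m_2,\ldots,m_k$ with $m_1$ at the top (root), each $m_{i+1}$ a child of $m_i$; every other value $\sigma_j$ is attached as a leaf (child) of the topmost chain element $m_i$ with $m_i<\sigma_j$. Example: for $\sigma=739465281$ the chain is $7,3,2,1$, the values $8,9$ are leaves of $7$, and $4,5,6$ are leaves of $3$. *)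

theory Defs
  imports Main
begin

definition perms :: "nat \<Rightarrow> nat list set" where
  "perms n = {w. distinct w \<and> set w = {1..n}}"

definition step2 :: "nat list \<Rightarrow> nat list \<Rightarrow> bool" where
  "step2 x y \<longleftrightarrow> (\<exists>u v a b c. a < b \<and> b < c \<and>
      ((x = u @ [b, a, c] @ v \<and> y = u @ [b, c, a] @ v) \<or>
       (x = u @ [a, b, c] @ v \<and> y = u @ [a, c, b] @ v)))"

definition equiv2 :: "nat list \<Rightarrow> nat list \<Rightarrow> bool" where
  "equiv2 = (symclp step2)\<^sup>*\<^sup>*"

definition lrmin :: "nat list \<Rightarrow> nat list" where
  "lrmin s = [s ! j. j \<leftarrow> [0..<length s], \<forall>i<j. s ! j < s ! i]"

text \<open>Edges (parent, child) of the rooted tree P_2(s).\<close>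
definition P2_edges :: "nat list \<Rightarrow> (nat \<times> nat) set" where
  "P2_edges s =
     {(lrmin s ! i, lrmin s ! Suc i) | i. Suc i < length (lrmin s)} \<union>
     {(hd (filter (\<lambda>m. m < v) (lrmin s)), v) | v. v \<in> set s \<and> v \<notin> set (lrmin s)}"

definition P2_less :: "nat list \<Rightarrow> (nat \<times> nat) set" where
  "P2_less s = (P2_edges s)\<^sup>+"

definition lin_ext :: "nat list \<Rightarrow> nat list \<Rightarrow> bool" where
  "lin_ext s w \<longleftrightarrow> (\<forall>i<length w. \<forall>j<length w. (w ! i, w ! j) \<in> P2_less s \<longrightarrow> i < j)"

end

theory Submission
  imports Defs
begin
fun lm :: "nat list \<Rightarrow> nat list" where "lm [] = []" | "lm (x#xs) = x # lm (filter (\<lambda>y. y<x) xs)"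

lemma lm_set: "set (lm s) \<subseteq> set s"
  by (induction s rule: lm.induct) auto

lemma lm_sorted: "sorted_wrt (>) (lm s)"
  by (induction s rule: lm.induct) (use lm_set in fastforce)+

lemma lm_append: "lm (u@v) = lm u @ lm (filter (\<lambda>y. \<forall>z\<in>set u. y<z) v)"
proof (induction u arbitrary: v rule: lm.induct)
  case 1 then show ?case by simp
next
  case (2 x xs)
  have "filter (\<lambda>y. \<forall>z\<in>set (filter (\<lambda>y. y<x) xs). y<z) (filter (\<lambda>y. y<x) v)
      = filter (\<lambda>y. \<forall>z\<in>set (x#xs). y<z) v"
    by (auto simp: filter_filter intro!: filter_cong)
  then show ?case using 2 by simp
qed

lemma lm_snoc: "lm (xs@[x]) = lm xs @ (if \<forall>y\<in>set xs. x<y then [x] else [])"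
  by (simp add: lm_append)

lemma lrmin_snoc: "lrmin (xs@[x]) = lrmin xs @ (if \<forall>y\<in>set xs. x<y then [x] else [])"
proof -
  have A: "map (\<lambda>j. if \<forall>i<j. (xs@[x]) ! j < (xs@[x]) ! i then [(xs@[x]) ! j] else []) [0..<length xs]
      = map (\<lambda>j. if \<forall>i<j. xs ! j < xs ! i then [xs ! j] else []) [0..<length xs]"
    by (rule map_cong) (auto simp: nth_append)
  have B: "(\<forall>i<length xs. x < (xs@[x]) ! i) = (\<forall>y\<in>set xs. x<y)"
    by (simp add: nth_append all_set_conv_all_nth)
  have "lrmin (xs@[x]) = concat (map (\<lambda>j. if \<forall>i<j. (xs@[x]) ! j < (xs@[x]) ! i then [(xs@[x]) ! j] else []) [0..<length xs])
      @ (if \<forall>i<length xs. x < (xs@[x]) ! i then [x] else [])"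
    by (simp add: lrmin_def)
  also have "\<dots> = lrmin xs @ (if \<forall>y\<in>set xs. x<y then [x] else [])"
    unfolding A B lrmin_def ..
  finally show ?thesis .
qed

lemma lrmin_lm: "lrmin s = lm s"
proof (induction s rule: rev_induct)
  case Nil then show ?case by (simp add: lrmin_def)
next
  case (snoc x xs) then show ?case by (simp add: lrmin_snoc lm_snoc)
qed

lemma set_lm: "set (lm s) = {s!j | j. j<length s \<and> (\<forall>i<j. s!j < s!i)}"
  unfolding lrmin_lm[symmetric] lrmin_def by (auto split: if_splits)


lemma lm_triple:
  fixes P :: "nat \<Rightarrow> bool"
  assumes dc: "\<And>x y. P y \<Longrightarrow> x < y \<Longrightarrow> P x" and abc: "a<b" "b<c"
  shows "lm (filter P [b,a,c] @ w) = lm (filter P [b,c,a] @ w)"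
    and "lm (filter P [a,b,c] @ w) = lm (filter P [a,c,b] @ w)"
proof -
  have "P b \<Longrightarrow> P a" "P c \<Longrightarrow> P b" using dc abc by blast+
  then show "lm (filter P [b,a,c] @ w) = lm (filter P [b,c,a] @ w)"
    and "lm (filter P [a,b,c] @ w) = lm (filter P [a,c,b] @ w)"
    using abc by (cases "P a"; cases "P b"; cases "P c"; simp)+
qed


lemma lm_step: assumes "step2 x y" shows "lm x = lm y" "set x = set y" "distinct x = distinct y"
proof -
  obtain u v a b c where abc: "a<b" "b<c" and
     cs: "(x = u @ [b, a, c] @ v \<and> y = u @ [b, c, a] @ v) \<or>
       (x = u @ [a, b, c] @ v \<and> y = u @ [a, c, b] @ v)"
    using assms unfolding step2_def by blast
  define P where "P = (\<lambda>y. \<forall>z\<in>set u. y<z)"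
  have dc: "\<And>x y. P y \<Longrightarrow> x < y \<Longrightarrow> P x" unfolding P_def by auto
  have e: "lm (u @ t @ v) = lm u @ lm (filter P t @ filter P v)" for t
    by (simp add: lm_append P_def)
  from cs show "lm x = lm y"
  proof
    assume h: "x = u @ [b, a, c] @ v \<and> y = u @ [b, c, a] @ v"
    show ?thesis using h e[of "[b,a,c]"] e[of "[b,c,a]"] lm_triple(1)[where P=P and a=a and b=b and c=c and w="filter P v", OF dc abc] by simp
  next
    assume h: "x = u @ [a, b, c] @ v \<and> y = u @ [a, c, b] @ v"
    show ?thesis using h e[of "[a,b,c]"] e[of "[a,c,b]"] lm_triple(2)[where P=P and a=a and b=b and c=c and w="filter P v", OF dc abc] by simp
  qed
  show "set x = set y" using cs by auto
  show "distinct x = distinct y" using cs by auto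
qed

lemma equiv2_inv: assumes "equiv2 x y" shows "lm x = lm y \<and> set x = set y \<and> (distinct x = distinct y)"
  using assms unfolding equiv2_def
proof (induction rule: rtranclp_induct)
  case base then show ?case by simp
next
  case (step y z) then show ?case using lm_step[of y z] lm_step[of z y] by (auto simp: symclp_def)
qed

lemma equiv2_refl: "equiv2 x x" by (simp add: equiv2_def)
lemma equiv2_sym: "equiv2 x y \<Longrightarrow> equiv2 y x"
  unfolding equiv2_def by (rule rtranclp_symclp_sym)
lemma equiv2_trans: "equiv2 x y \<Longrightarrow> equiv2 y z \<Longrightarrow> equiv2 x z"
  unfolding equiv2_def by (rule rtranclp_trans)

lemma step2_cong: assumes "step2 x y" shows "step2 (p@x@q) (p@y@q)"
proof -
  obtain u v a b c where abc: "a<b" "b<c" and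
     cs: "(x = u @ [b, a, c] @ v \<and> y = u @ [b, c, a] @ v) \<or>
       (x = u @ [a, b, c] @ v \<and> y = u @ [a, c, b] @ v)"
    using assms unfolding step2_def by blast
  from cs have "(p@x@q = (p@u) @ [b, a, c] @ (v@q) \<and> p@y@q = (p@u) @ [b, c, a] @ (v@q)) \<or>
       (p@x@q = (p@u) @ [a, b, c] @ (v@q) \<and> p@y@q = (p@u) @ [a, c, b] @ (v@q))" by auto
  with abc show ?thesis unfolding step2_def by blast
qed

lemma equiv2_cong: assumes "equiv2 x y" shows "equiv2 (p@x@q) (p@y@q)"
  using assms unfolding equiv2_def
proof (induction rule: rtranclp_induct)
  case base then show ?case by simp
next
  case (step y z)
  then have "symclp step2 (p@y@q) (p@z@q)" using step2_cong by (auto simp: symclp_def)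
  with step.IH show ?case by (rule rtranclp.rtrancl_into_rtrancl)
qed


lemma equiv2_swap:
  assumes "distinct [x,y,z]" "x<y \<or> x<z"
  shows "equiv2 (p@[x,y,z]@q) (p@[x,z,y]@q)"
proof -
  have "symclp step2 [x,y,z] [x,z,y]"
  proof (cases "x<y \<and> x<z")
    case True
    show ?thesis
    proof (cases "y<z")
      case True
      then have "step2 [x,y,z] [x,z,y]" unfolding step2_def
        using \<open>x<y \<and> x<z\<close> by (intro exI[of _ "[]"] exI[of _ x] exI[of _ y] exI[of _ z]) auto
      then show ?thesis by (simp add: symclp_def)
    next
      case False
      then have "z<y" using assms(1) by auto
      then have "step2 [x,z,y] [x,y,z]" unfolding step2_def
        using \<open>x<y \<and> x<z\<close> by (intro exI[of _ "[]"] exI[of _ x] exI[of _ z] exI[of _ y]) auto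
      then show ?thesis by (simp add: symclp_def)
    qed
  next
    case False
    show ?thesis
    proof (cases "y<x")
      case True
      then have "x<z" using False assms(2) by auto
      then have "step2 [x,y,z] [x,z,y]" unfolding step2_def
        using \<open>y<x\<close> by (intro exI[of _ "[]"] exI[of _ y] exI[of _ x] exI[of _ z]) auto
      then show ?thesis by (simp add: symclp_def)
    next
      case F2: False
      then have "x<y" "z<x" using False assms by auto
      then have "step2 [x,z,y] [x,y,z]" unfolding step2_def
        by (intro exI[of _ "[]"] exI[of _ z] exI[of _ x] exI[of _ y]) auto
      then show ?thesis by (simp add: symclp_def)
    qed
  qed
  then have "equiv2 [x,y,z] [x,z,y]" unfolding equiv2_def by auto
  then show ?thesis by (rule equiv2_cong)
qed


lemma move_left:
  assumes "sorted_wrt (<) (p#as)" "x \<notin> set (p#as)"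
  shows "equiv2 (pre @ p # as @ x # r) (pre @ p # x # as @ r)"
  using assms
proof (induction as arbitrary: r rule: rev_induct)
  case Nil then show ?case by (simp add: equiv2_refl)
next
  case (snoc a as')
  define q where "q = last (p#as')"
  define ys where "ys = butlast (p#as')"
  have pq: "p#as' = ys @ [q]" unfolding q_def ys_def by simp
  have "q \<in> set (p#as')" unfolding q_def by (rule last_in_set) simp
  then have qa: "q < a" using snoc.prems(1) by (auto simp: sorted_wrt_append)
  have d: "distinct [q,a,x]" using qa snoc.prems(2) \<open>q \<in> set (p#as')\<close> by auto
  have e1: "pre @ p # (as' @ [a]) @ x # r = (pre@ys) @ [q,a,x] @ r"
    using pq by (metis append.assoc append_Cons append_Nil)
  have e2: "pre @ p # as' @ x # (a # r) = (pre@ys) @ [q,x,a] @ r"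
    using pq by (metis append.assoc append_Cons append_Nil)
  have "equiv2 ((pre@ys) @ [q,a,x] @ r) ((pre@ys) @ [q,x,a] @ r)"
    using equiv2_swap d qa by blast
  then have A: "equiv2 (pre @ p # (as' @ [a]) @ x # r) (pre @ p # as' @ x # (a # r))"
    unfolding e1 e2 .
  have "equiv2 (pre @ p # as' @ x # (a # r)) (pre @ p # x # as' @ (a # r))"
    using snoc.IH[of "a#r"] snoc.prems by (auto simp: sorted_wrt_append)
  then show ?case using equiv2_trans[OF A] by simp
qed

lemma move_insort:
  assumes "sorted_wrt (<) (p#S)" "x \<notin> set (p#S)" "p < x"
  shows "equiv2 (pre @ p # S @ x # r) (pre @ p # insort x S @ r)"
  using assms
proof (induction S arbitrary: pre p)
  case Nil then show ?case by (simp add: equiv2_refl)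
next
  case (Cons s S')
  show ?case
  proof (cases "x < s")
    case True
    then show ?thesis using move_left[OF Cons.prems(1,2), of pre r] by simp
  next
    case False
    then have "s < x" using Cons.prems(2) by auto
    have "equiv2 ((pre@[p]) @ s # S' @ x # r) ((pre@[p]) @ s # insort x S' @ r)"
      using Cons.IH[of s "pre@[p]"] Cons.prems \<open>s<x\<close> by auto
    then show ?thesis using False \<open>s<x\<close> by simp
  qed
qed


lemma lm_two: "x < m \<Longrightarrow> lm (m#x#r) = m # lm (x#r)"
proof -
  assume xm: "x<m"
  have "filter (\<lambda>y. y < x) (filter (\<lambda>y. y < m) r) = filter (\<lambda>y. y < x) r"
    using xm by (auto simp: filter_filter intro!: filter_cong)
  then show ?thesis using xm by simp
qed

lemma canon_aux:
  assumes "finite A" "\<forall>a\<in>A. m<a" "distinct (m#r)" "A \<inter> set (m#r) = {}"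
  shows "equiv2 (m # sorted_list_of_set A @ r) (lm (m#r) @ sorted_list_of_set (A \<union> set r - set (lm (m#r))))"
  using assms
proof (induction r arbitrary: m A)
  case Nil
  then have "A \<union> set [] - set (lm [m]) = A" by auto
  then show ?case by (simp add: equiv2_refl)
next
  case (Cons x r')
  define S where "S = sorted_list_of_set A"
  have setS: "set S = A" unfolding S_def using Cons.prems(1) by simp
  have sS: "sorted_wrt (<) (m#S)" using strict_sorted_list_of_set[of A] Cons.prems(2) setS
    unfolding S_def by simp
  have xS: "x \<notin> set (m#S)" using setS Cons.prems(3,4) by auto
  show ?case
  proof (cases "m < x")
    case True
    have 1: "equiv2 ([] @ m # S @ x # r') ([] @ m # insort x S @ r')"
      by (rule move_insort[OF sS xS True])
    have ins: "insort x S = sorted_list_of_set (insert x A)"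
      unfolding S_def using Cons.prems(1) xS setS by (simp add: sorted_list_of_set_insert)
    have 2: "equiv2 (m # sorted_list_of_set (insert x A) @ r')
       (lm (m#r') @ sorted_list_of_set (insert x A \<union> set r' - set (lm (m#r'))))"
      using Cons.IH[where A="insert x A" and m=m] Cons.prems True by auto
    have 3: "lm (m#x#r') = lm (m#r')" using True by simp
    have 4: "insert x A \<union> set r' = A \<union> set (x#r')" by auto
    show ?thesis using equiv2_trans[OF 1[unfolded ins, simplified] 2] 3 4 unfolding S_def by simp
  next
    case False
    then have xm: "x < m" using Cons.prems(3) by auto
    have 1: "equiv2 ([] @ m # S @ x # r') ([] @ m # x # S @ r')"
      by (rule move_left[OF sS xS])
    have "equiv2 (x # S @ r') (lm (x#r') @ sorted_list_of_set (A \<union> set r' - set (lm (x#r'))))"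
    proof -
      have "\<forall>a\<in>A. x<a" using xm Cons.prems(2) by force
      then show ?thesis using Cons.IH[where m=x and A=A] Cons.prems xm unfolding S_def by auto
    qed
    then have 2: "equiv2 ([m] @ (x # S @ r') @ []) ([m] @ (lm (x#r') @ sorted_list_of_set (A \<union> set r' - set (lm (x#r')))) @ [])"
      by (rule equiv2_cong)
    have 3: "lm (m#x#r') = m # lm (x#r')" using xm by (rule lm_two)
    have "x \<in> set (lm (x#r'))" by simp
    then have 4: "A \<union> set (x#r') - set (lm (m#x#r')) = A \<union> set r' - set (lm (x#r'))"
      using 3 Cons.prems(3,4) by auto
    show ?thesis using equiv2_trans[OF 1[simplified] 2[simplified]] 3 4 unfolding S_def by simp
  qed
qed

definition canon :: "nat list \<Rightarrow> nat list" where
  "canon w = lm w @ sorted_list_of_set (set w - set (lm w))"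

lemma equiv2_canon: "distinct w \<Longrightarrow> equiv2 w (canon w)"
proof (cases w)
  case Nil then show ?thesis by (simp add: canon_def equiv2_refl)
next
  case (Cons m r)
  assume d: "distinct w"
  have "equiv2 (m # sorted_list_of_set {} @ r) (lm (m#r) @ sorted_list_of_set ({} \<union> set r - set (lm (m#r))))"
    using d Cons by (intro canon_aux) auto
  moreover have "{} \<union> set r - set (lm (m#r)) = set (m#r) - set (lm (m#r))" by auto
  ultimately show ?thesis using Cons by (simp add: canon_def)
qed


lemma lm_min: "v \<in> set s \<Longrightarrow> \<exists>m\<in>set (lm s). m \<le> v"
proof (induction s rule: lm.induct)
  case 1 then show ?case by simp
next
  case (2 x xs)
  show ?case
  proof (cases "v < x")
    case True
    then have "v \<in> set (filter (\<lambda>y. y<x) xs)" using 2(2) by auto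
    then show ?thesis using 2(1) by auto
  next
    case False then show ?thesis by auto
  qed
qed

lemma hd_filter_nth: "filter P xs \<noteq> [] \<Longrightarrow>
  \<exists>i<length xs. hd (filter P xs) = xs!i \<and> P (xs!i) \<and> (\<forall>k<i. \<not> P (xs!k))"
proof (induction xs)
  case Nil then show ?case by simp
next
  case (Cons x xs)
  show ?case
  proof (cases "P x")
    case True then show ?thesis by (intro exI[of _ 0]) auto
  next
    case False
    then obtain i where "i<length xs" "hd (filter P xs) = xs!i" "P (xs!i)" "\<forall>k<i. \<not> P (xs!k)"
      using Cons by auto
    then show ?thesis using False
      by (intro exI[of _ "Suc i"]) (auto simp: less_Suc_eq_0_disj)
  qed
qed

lemma lm_hd: assumes "v \<in> set s" "v \<notin> set (lm s)"
  shows "\<exists>i<length (lm s). hd (filter (\<lambda>m. m < v) (lm s)) = lm s ! i \<and> lm s ! i < v \<and> (\<forall>k<i. \<not> lm s ! k < v)"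
proof -
  obtain m where "m \<in> set (lm s)" "m \<le> v" using lm_min[OF assms(1)] by blast
  then have "m < v" using assms(2) by (cases "m = v") auto
  then have "filter (\<lambda>m. m < v) (lm s) \<noteq> []" using \<open>m \<in> set (lm s)\<close> by (auto simp: filter_empty_conv)
  from hd_filter_nth[OF this] show ?thesis by blast
qed

lemma lm_nth_less: "i < j \<Longrightarrow> j < length (lm s) \<Longrightarrow> lm s ! j < lm s ! i"
  using lm_sorted[of s] by (simp add: sorted_wrt_iff_nth_less)

lemma edges_lm: "P2_edges s =
     {(lm s ! i, lm s ! Suc i) | i. Suc i < length (lm s)} \<union>
     {(hd (filter (\<lambda>m. m < v) (lm s)), v) | v. v \<in> set s \<and> v \<notin> set (lm s)}"
  unfolding P2_edges_def lrmin_lm ..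

lemma chain_trancl: "i < j \<Longrightarrow> j < length (lm s) \<Longrightarrow> (lm s ! i, lm s ! j) \<in> (P2_edges s)\<^sup>+"
proof (induction j)
  case 0 then show ?case by simp
next
  case (Suc j)
  have e: "(lm s ! j, lm s ! Suc j) \<in> P2_edges s" using Suc.prems unfolding edges_lm by blast
  show ?case
  proof (cases "i = j")
    case True then show ?thesis using e by auto
  next
    case False
    then have "(lm s ! i, lm s ! j) \<in> (P2_edges s)\<^sup>+" using Suc by auto
    then show ?thesis using e by (rule trancl_into_trancl)
  qed
qed

lemma edges_in: "(a,b) \<in> P2_edges s \<Longrightarrow> a \<in> set s \<and> b \<in> set s"
proof -
  assume "(a,b) \<in> P2_edges s"
  then consider (c) i where "Suc i < length (lm s)" "a = lm s ! i" "b = lm s ! Suc i"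
    | (l) "b \<in> set s" "b \<notin> set (lm s)" "a = hd (filter (\<lambda>m. m < b) (lm s))"
    unfolding edges_lm by blast
  then show ?thesis
  proof cases
    case c then show ?thesis using lm_set[of s] nth_mem[of i "lm s"] nth_mem[of "Suc i" "lm s"] by auto
  next
    case l
    then obtain i where "i<length (lm s)" "a = lm s ! i" using lm_hd[of b s] by auto
    then show ?thesis using l lm_set[of s] nth_mem[of i "lm s"] by auto
  qed
qed

lemma sorted_gt_unique: "sorted_wrt (>) (xs::nat list) \<Longrightarrow> sorted_wrt (>) ys \<Longrightarrow> set xs = set ys \<Longrightarrow> xs = ys"
proof -
  assume a: "sorted_wrt (>) xs" "sorted_wrt (>) ys" "set xs = set ys"
  have "sorted_wrt (<) (rev xs)" "sorted_wrt (<) (rev ys)" using a by (simp_all add: sorted_wrt_rev)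
  then have "sorted (rev xs)" "distinct (rev xs)" "sorted (rev ys)" "distinct (rev ys)"
    by (simp_all add: strict_sorted_iff)
  then have "rev xs = rev ys" using a(3) by (intro sorted_distinct_set_unique) auto
  then show ?thesis by simp
qed


lemma leaf_edge: "v \<in> set s \<Longrightarrow> v \<notin> set (lm s) \<Longrightarrow> (hd (filter (\<lambda>m. m < v) (lm s)), v) \<in> P2_edges s"
  unfolding edges_lm by blast

lemma lr_in: assumes "\<forall>i<j. w!j < w!i" "j < length w" shows "w!j \<in> set (lm w)"
  unfolding set_lm by (rule CollectI, rule exI[of _ j], simp add: assms)

lemma lr_char:
  assumes dw: "distinct w" and jl: "j<length w"
  shows "w!j \<in> set (lm w) \<longleftrightarrow> (\<forall>i<j. w!j < w!i)"
proof
  assume "w!j \<in> set (lm w)"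
  then have "w!j \<in> {w!j' | j'. j'<length w \<and> (\<forall>i<j'. w!j' < w!i)}" by (simp only: set_lm)
  then obtain j' where j': "j'<length w" "w!j' = w!j" "\<forall>i<j'. w!j' < w!i" by auto
  have "j' = j" using nth_eq_iff_index_eq[OF dw j'(1) jl] j'(2) by simp
  then show "\<forall>i<j. w!j < w!i" using j'(3) by simp
next
  assume "\<forall>i<j. w!j < w!i"
  then show "w!j \<in> set (lm w)" using jl by (rule lr_in)
qed

lemma lin_to_lm:
  assumes ds: "distinct s" and dw: "distinct w" and sw: "set w = set s" and lin: "lin_ext s w"
  shows "lm w = lm s"
proof -
  let ?L = "lm s" and ?E = "P2_edges s"
  have lin': "i<j" if "i<length w" "j<length w" "(w!i,w!j) \<in> ?E\<^sup>+" for i j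
    using lin that unfolding lin_ext_def P2_less_def by blast
  have S1: "y \<in> set (lm w)" if yL: "y \<in> set ?L" for y
  proof -
    have "y \<in> set w" using yL lm_set sw by auto
    then obtain j where j: "j<length w" "w!j = y" by (auto simp: in_set_conv_nth)
    obtain a where a: "a < length ?L" "?L!a = y" using yL by (auto simp: in_set_conv_nth)
    have "w!j < w!i" if ij: "i<j" for i
    proof (rule ccontr)
      assume "\<not> w!j < w!i"
      moreover have "w!i \<noteq> w!j" using dw ij j(1) by (simp add: nth_eq_iff_index_eq)
      ultimately have zy: "w!i < y" using j by auto
      have zs: "w!i \<in> set s" using sw ij j(1) by (metis less_trans nth_mem)
      have "(y, w!i) \<in> ?E\<^sup>+"
      proof (cases "w!i \<in> set ?L")
        case True
        then obtain b where b: "b < length ?L" "?L!b = w!i" by (auto simp: in_set_conv_nth)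
        have "a < b"
        proof (rule ccontr)
          assume "\<not> a<b"
          then have "b < a \<or> b = a" by auto
          then show False using lm_nth_less[of b a s] a b zy by auto
        qed
        then show ?thesis using chain_trancl[of a b s] a b by simp
      next
        case False
        obtain b where b: "b<length ?L" "hd (filter (\<lambda>m. m < w!i) ?L) = ?L!b" "?L!b < w!i"
          using lm_hd[OF zs False] by blast
        have e: "(?L!b, w!i) \<in> ?E" using leaf_edge[OF zs False] b(2) by simp
        have "a < b"
        proof (rule ccontr)
          assume "\<not> a<b"
          then have "b < a \<or> b = a" by auto
          then show False using lm_nth_less[of b a s] a b zy by auto
        qed
        then have "(y, ?L!b) \<in> ?E\<^sup>+" using chain_trancl[of a b s] a b by simp
        then show ?thesis using e by (rule trancl_into_trancl)
      qed
      then have "j < i" using lin' j ij by (metis less_trans)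
      then show False using ij by simp
    qed
    then have "\<forall>i<j. w!j < w!i" by blast
    then show ?thesis using lr_in[of j w] j by simp
  qed
  have S2: "y \<in> set ?L" if yw: "y \<in> set (lm w)" for y
  proof (rule ccontr)
    assume yL: "y \<notin> set ?L"
    have "y \<in> {w!j' | j'. j'<length w \<and> (\<forall>i<j'. w!j' < w!i)}" using yw by (simp only: set_lm)
    then obtain j where j: "j<length w" "w!j = y" "\<forall>i<j. y < w!i" by auto
    have ys: "y \<in> set s" using yw lm_set sw by auto
    obtain b where b: "b<length ?L" "hd (filter (\<lambda>m. m < y) ?L) = ?L!b" "?L!b < y"
      using lm_hd[OF ys yL] by blast
    have e: "(?L!b, y) \<in> ?E" using leaf_edge[OF ys yL] b(2) by simp
    have "?L!b \<in> set w" using b(1) lm_set[of s] sw nth_mem by blast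
    then obtain i where i: "i<length w" "w!i = ?L!b" by (auto simp: in_set_conv_nth)
    have "i<j" using lin'[of i j] e i j by auto
    then show False using j i b by fastforce
  qed
  have "set (lm w) = set ?L" using S1 S2 by blast
  then show ?thesis using sorted_gt_unique lm_sorted by blast
qed


lemma lm_to_lin:
  assumes dw: "distinct w" and sw: "set w = set s" and eq: "lm w = lm s"
  shows "lin_ext s w"
proof -
  let ?L = "lm s" and ?E = "P2_edges s"
  have lrw: "\<forall>i<j. w!j < w!i" if jl: "j<length w" and jm: "w!j \<in> set (lm w)" for j
    using lr_char[OF dw jl] jm by blast
  have P: "i<j" if "i<length w" "j<length w" "w!i \<in> set (lm w)" "w!j \<in> set (lm w)" "w!j < w!i" for i j
  proof (rule ccontr)
    assume "\<not> i<j"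
    moreover have "i \<noteq> j" using that(5) by auto
    ultimately have "j<i" by simp
    then have "w!i < w!j" using lrw[OF that(1,3)] by blast
    then show False using that(5) by simp
  qed
  have Q: "\<exists>k<j. w!k \<in> set (lm w) \<and> w!k < v" if "j<length w" "i'<j" "w!i' < v" for j i' v
    using that(2,3)
  proof (induction i' rule: less_induct)
    case (less i')
    show ?case
    proof (cases "\<forall>k<i'. w!i' < w!k")
      case True
      moreover have "i' < length w" using less.prems(1) that(1) by simp
      ultimately have "w!i' \<in> set (lm w)" by (rule lr_in)
      then show ?thesis using less.prems by blast
    next
      case False
      then obtain k where k: "k<i'" "w!k \<le> w!i'" by (auto simp: not_less)
      have "w!k < v" using k(2) less.prems(2) by simp
      moreover have "k < j" using k(1) less.prems(1) by simp
      ultimately show ?thesis using less.IH[OF k(1)] by blast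
    qed
  qed
  have fwd: "i<j" if e: "(a,b) \<in> ?E" and ij: "i<length w" "j<length w" "w!i = a" "w!j = b" for a b i j
  proof -
    from e consider (c) c where "Suc c < length ?L" "a = ?L ! c" "b = ?L ! Suc c"
      | (l) "b \<in> set s" "b \<notin> set ?L" "a = hd (filter (\<lambda>m. m < b) ?L)"
      unfolding edges_lm by blast
    then show ?thesis
    proof cases
      case c
      have "w!i \<in> set (lm w)" "w!j \<in> set (lm w)" using c eq ij(3,4) by auto
      moreover have "w!j < w!i" using c lm_nth_less[of c "Suc c" s] ij(3,4) by simp
      ultimately show ?thesis by (rule P[OF ij(1,2)])
    next
      case l
      obtain c where cc: "c<length ?L" "a = ?L!c" "?L!c < b" "\<forall>k<c. \<not> ?L!k < b"
        using lm_hd[OF l(1,2)] l(3) by auto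
      have "\<not> (\<forall>i'<j. w!j < w!i')"
      proof
        assume "\<forall>i'<j. w!j < w!i'"
        then have "w!j \<in> set (lm w)" using ij(2) by (rule lr_in)
        then show False using l eq ij(4) by simp
      qed
      then obtain i' where i': "i'<j" "w!i' \<le> w!j" by (auto simp: not_less)
      moreover have "w!i' \<noteq> w!j" using dw i' ij(2) by (simp add: nth_eq_iff_index_eq)
      ultimately have "w!i' < b" using ij by auto
      then obtain k where k: "k<j" "w!k \<in> set (lm w)" "w!k < b" using Q[OF ij(2) i'(1)] by blast
      then obtain d where d: "d < length ?L" "?L!d = w!k" using eq by (auto simp: in_set_conv_nth)
      have "\<not> d < c" using cc(4) d k by auto
      then consider "d = c" | "c < d" by linarith
      then show ?thesis
      proof cases
        case 1
        then have "w!k = w!i" using d cc ij by simp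
        moreover have "k < length w" using k(1) ij(2) by simp
        ultimately have "k = i" using dw ij(1) nth_eq_iff_index_eq by blast
        then show ?thesis using k by simp
      next
        case 2
        then have "w!k < w!i" using lm_nth_less[of c d s] d cc ij by simp
        moreover have "w!i \<in> set (lm w)" using cc ij eq by simp
        ultimately have "i < k" using P[of i k] k ij by auto
        then show ?thesis using k by simp
      qed
    qed
  qed
  have tr: "(a,b) \<in> ?E\<^sup>+ \<Longrightarrow> \<forall>i j. i<length w \<and> j<length w \<and> w!i = a \<and> w!j = b \<longrightarrow> i<j" for a b
  proof (induction rule: trancl_induct)
    case (base y)
    show ?case
    proof (intro allI impI)
      fix i j assume h: "i<length w \<and> j<length w \<and> w!i = a \<and> w!j = y"
      then show "i<j" using fwd[OF base] by blast
    qed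
  next
    case (step y z)
    have "y \<in> set w" using edges_in[OF step.hyps(2)] sw by simp
    then obtain k where k: "k<length w" "w!k = y" by (auto simp: in_set_conv_nth)
    show ?case
    proof (intro allI impI)
      fix i j assume h: "i<length w \<and> j<length w \<and> w!i = a \<and> w!j = z"
      then have "i<k" using step.IH k by blast
      moreover have "k<j" using fwd[OF step.hyps(2) k(1)] k(2) h by blast
      ultimately show "i<j" by simp
    qed
  qed
  show ?thesis unfolding lin_ext_def P2_less_def
  proof (intro allI impI)
    fix i j assume "i < length w" "j < length w" "(w ! i, w ! j) \<in> ?E\<^sup>+"
    then show "i<j" using tr[of "w!i" "w!j"] by blast
  qed
qed


theorem mainTheorem12:
  fixes n :: nat and \<sigma> :: "nat list"
  assumes "\<sigma> \<in> perms n"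
  shows "{w \<in> perms n. lin_ext \<sigma> w} = {w. equiv2 \<sigma> w}"
proof
  have ds: "distinct \<sigma>" and ss: "set \<sigma> = {1..n}" using assms by (auto simp: perms_def)
  show "{w \<in> perms n. lin_ext \<sigma> w} \<subseteq> {w. equiv2 \<sigma> w}"
  proof
    fix w assume "w \<in> {w \<in> perms n. lin_ext \<sigma> w}"
    then have dw: "distinct w" and sw: "set w = set \<sigma>" and lin: "lin_ext \<sigma> w"
      using ss by (auto simp: perms_def)
    have "lm w = lm \<sigma>" by (rule lin_to_lm[OF ds dw sw lin])
    then have "canon w = canon \<sigma>" using sw by (simp add: canon_def)
    then have "equiv2 \<sigma> w" using equiv2_canon[OF ds] equiv2_canon[OF dw]
      by (metis equiv2_sym equiv2_trans)
    then show "w \<in> {w. equiv2 \<sigma> w}" by simp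
  qed
  show "{w. equiv2 \<sigma> w} \<subseteq> {w \<in> perms n. lin_ext \<sigma> w}"
  proof
    fix w assume "w \<in> {w. equiv2 \<sigma> w}"
    then have "lm \<sigma> = lm w \<and> set \<sigma> = set w \<and> distinct \<sigma> = distinct w" using equiv2_inv by simp
    then have "distinct w" "set w = set \<sigma>" "lm w = lm \<sigma>" using ds by auto
    then show "w \<in> {w \<in> perms n. lin_ext \<sigma> w}"
      using lm_to_lin[of w \<sigma>] ss by (auto simp: perms_def)
  qed
qed

end
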